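(* Consider $n\ge 2$ unit-speed aircraft with positions $p_i\in\mathbb{R}^2$ and headings $\psi_i\in(-\pi,\pi]$ obeying $\dot p_i=(\cos\psi_i,\sin\psi_i)^T$, $\dot\psi_i=u_{\psi_i}$, $i\in\{1,\dots,n\}$. Let $\mathbb{G}=(\mathcal{V},\mathcal{E})$ be a connected graph on $\mathcal{V}=\{1,\dots,n\}$ with incidence matrix $B$, and assume $\mathbb{G}$ does not contain any cycles. Fix $r>0$, desired angles $z_k^*\in\mathbb{S}^1$ for $k\in\{1,\dots,|\mathcal{E}|\}$, and a gain $k_r>0$ with $r-\pi k_r\max_{i\in\mathcal{V}}|\mathcal{N}_i|>0$. Let $\theta_i=\operatorname{atan2}(p_{i,y},p_{i,x})$ be the angle of vehicle $i$ about the origin, $\theta=(\theta_1,\dots,\theta_n)^T$, $z=B^T\theta$, and let the formation error $e_\theta\in\mathbb{T}^{|\mathcal{E}|}$ have components $e_{\theta_k}=z_k-z_k^*\in\mathbb{S}^1$, represented in $(-\pi,\pi]$. Each vehicle $i$ uses the control $^iu_r=k_rB_ie_\theta$ (where $B_i$ is the $i$-th row of $B$), sets $^ic={^iu_r}^2+2r\,{^iu_r}$, and tracks the curve $^i\mathcal{C}=\{p:\varphi(p)={^ic}\}$ (equivalently the circle of radius $r+{^iu_r}$ centered at the origin), with $\varphi(p)=p_x^2+p_y^2-r^2$, by employing the guidance steering law described in the context. Assume (Assumption 1) that each vehicle $i$ is always tracking and traveling over $^i\mathcal{C}$, so that its angular velocity about the origin is $\dot\theta_i=1/(r+{^iu_r})=1/(r+k_rB_ie_\theta)$.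 Then the origin $e_\theta=0$ of the error dynamics is locally exponentially stable.
   Context: $\mathcal{N}_i=\{j\in\mathcal{V}:(i,j)\in\mathcal{E}\}$ is the neighbor set of vehicle $i$. Edges are ordered pairs $\mathcal{E}_k=(\mathcal{E}_k^{\text{tail}},\mathcal{E}_k^{\text{head}})$; the incidence matrix $B\in\mathbb{R}^{|\mathcal{V}|\times|\mathcal{E}|}$ has entries $b_{ik}=+1$ if $i=\mathcal{E}_k^{\text{tail}}$, $-1$ if $i=\mathcal{E}_k^{\text{head}}$, $0$ otherwise. A cycle is a path (sequence of vertices with consecutive ones adjacent) starting and ending at the same vertex; connected means any two vertices are joined by a path. $\mathbb{S}^1$ is the circle group and $\mathbb{T}^m$ the $m$-torus. Guidance law: for a curve given as a level set $\{\varphi(p)=c\}$, with error $e(p)=\varphi(p)-c$, normal $n(p)=\nabla\varphi(p)$, tangent $\tau(p)=En(p)$ with $E=\begin{bmatrix}0&1\\-1&0\end{bmatrix}$, the guidance vector field is $\dot p_d=\tau-k_e e\,n$ with $k_e>0$, and the steering input is $u_\psi=-\left(E\hat{\dot p}_d\hat{\dot p}_d^TE\left((E-k_ee)H(\varphi)\dot p-k_e n^T\dot p\, n\right)\right)^TE\frac{\dot p_d}{\|\dot p_d\|^2}+k_d\hat{\dot p}^TE\hat{\dot p}_d$ with $k_d>0$, where $H$ is the Hessian and $\hat x$ denotes $x/\|x\|$. *)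

theory Defs
  imports "HOL-Analysis.Analysis"
begin

text \<open>Graphs on the vertex set {0..<n} (vertex i+1 of the paper is i here) with
  oriented edges given as a list E; edge k (k < length E) is E!k = (tail, head).\<close>

definition adj :: "(nat \<times> nat) list \<Rightarrow> nat \<Rightarrow> nat \<Rightarrow> bool" where
  "adj E i j \<longleftrightarrow> (i, j) \<in> set E \<or> (j, i) \<in> set E"

definition simple_graph :: "nat \<Rightarrow> (nat \<times> nat) list \<Rightarrow> bool" where
  "simple_graph n E \<longleftrightarrow>
     (\<forall>(i, j) \<in> set E. i < n \<and> j < n \<and> i \<noteq> j) \<and>
     (\<forall>k < length E. \<forall>l < length E. k \<noteq> l \<longrightarrow>
        E!k \<noteq> E!l \<and> E!k \<noteq> (snd (E!l), fst (E!l)))"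

definition is_path :: "(nat \<times> nat) list \<Rightarrow> nat list \<Rightarrow> bool" where
  "is_path E ps \<longleftrightarrow> ps \<noteq> [] \<and> (\<forall>k. Suc k < length ps \<longrightarrow> adj E (ps!k) (ps!Suc k))"

definition graph_connected :: "nat \<Rightarrow> (nat \<times> nat) list \<Rightarrow> bool" where
  "graph_connected n E \<longleftrightarrow>
     (\<forall>i < n. \<forall>j < n. \<exists>ps. is_path E ps \<and> hd ps = i \<and> last ps = j)"

text \<open>A cycle: a closed path v0 v1 ... v(k-1) v0 with k \<ge> 3 distinct vertices
  (the non-degenerate reading of "a path starting and ending at the same vertex").\<close>
definition has_cycle :: "(nat \<times> nat) list \<Rightarrow> bool" where
  "has_cycle E \<longleftrightarrow>
     (\<exists>vs. length vs \<ge> 3 \<and> distinct vs \<and> is_path E (vs @ [hd vs]))"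

definition inc :: "(nat \<times> nat) list \<Rightarrow> nat \<Rightarrow> nat \<Rightarrow> real" where
  "inc E i k = (if i = fst (E!k) then 1 else if i = snd (E!k) then -1 else 0)"

definition nbrs :: "(nat \<times> nat) list \<Rightarrow> nat \<Rightarrow> nat set" where
  "nbrs E i = {j. adj E i j}"

text \<open>Representative of an angle in (-pi, pi].\<close>
definition wrap :: "real \<Rightarrow> real" where
  "wrap x = x - 2 * pi * of_int \<lceil>(x - pi) / (2 * pi)\<rceil>"

definition err :: "nat \<Rightarrow> (nat \<times> nat) list \<Rightarrow> (nat \<Rightarrow> real) \<Rightarrow> (real \<Rightarrow> nat \<Rightarrow> real)
                    \<Rightarrow> real \<Rightarrow> nat \<Rightarrow> real" where
  "err n E zs \<theta> t k = wrap ((\<Sum>i<n. inc E i k * \<theta> t i) - zs k)"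

definition vnorm :: "nat \<Rightarrow> (nat \<Rightarrow> real) \<Rightarrow> real" where
  "vnorm m v = sqrt (\<Sum>k<m. (v k)\<^sup>2)"

end

theory Submission
  imports Defs
begin

lemma wrap_bounds: "- pi < wrap x \<and> wrap x \<le> pi"
proof -
  define q where "q = (x - pi) / (2*pi)"
  define c where "c = (of_int \<lceil>q\<rceil> :: real)"
  have j1: "c - 1 < q" "q \<le> c" unfolding c_def by linarith+
  have x: "x = pi + 2*pi*q" unfolding q_def by simp
  have w: "wrap x = pi + 2*pi*q - 2*pi*c" unfolding wrap_def c_def q_def by (simp add: x[symmetric])
  have a: "2*pi*q \<le> 2*pi*c" using j1 by simp
  have "c < q + 1" using j1 by simp
  then have "2*pi*c < 2*pi*(q + 1)" by simp
  then have b: "2*pi*c < 2*pi*q + 2*pi" by (simp add: algebra_simps)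
  show ?thesis using a b unfolding w by simp
qed

lemma cos_wrap: "cos (wrap x) = cos x"
proof -
  have "cos (x - 2*pi* of_int \<lceil>(x - pi) / (2 * pi)\<rceil>) = cos x"
    by (simp add: cos_diff)
  then show ?thesis unfolding wrap_def .
qed

lemma wrap_local:
  assumes "\<bar>wrap x\<bar> < pi"
  shows "\<exists>\<epsilon>>0. \<forall>y. \<bar>y - x\<bar> < \<epsilon> \<longrightarrow> wrap y = y - (x - wrap x)"
proof -
  define q where "q = (x - pi) / (2*pi)"
  define j where "j = \<lceil>q\<rceil>"
  have x: "x = pi + 2*pi*q" unfolding q_def by simp
  have w: "wrap x = x - 2*pi* of_int j" unfolding wrap_def q_def j_def by simp
  have j1: "of_int j - 1 < q" "q < of_int j"
  proof -
    show "of_int j - 1 < q" unfolding j_def by linarith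
    have "x - 2*pi* of_int j < pi" using assms w by simp
    then have "2*pi*q < 2*pi* of_int j" using x by simp
    then show "q < of_int j" by simp
  qed
  define \<epsilon> where "\<epsilon> = 2*pi * min (of_int j - q) (q - (of_int j - 1))"
  have "\<epsilon> > 0" unfolding \<epsilon>_def using j1 by simp
  moreover have "wrap y = y - (x - wrap x)" if "\<bar>y - x\<bar> < \<epsilon>" for y
  proof -
    define qy where "qy = (y - pi) / (2*pi)"
    have "\<bar>qy - q\<bar> * (2*pi) = \<bar>y - x\<bar>" unfolding qy_def q_def
      by (simp add: field_simps abs_mult)
    then have "\<bar>qy - q\<bar> * (2*pi) < 2*pi * min (of_int j - q) (q - (of_int j - 1))"
      using that \<epsilon>_def by simp
    then have "\<bar>qy - q\<bar> < min (of_int j - q) (q - (of_int j - 1))"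
      by (simp add: mult.commute)
    then have "of_int j - 1 < qy" "qy \<le> of_int j" by auto
    then have "\<lceil>qy\<rceil> = j" by (simp add: ceiling_eq_iff)
    then show ?thesis unfolding wrap_def qy_def using w by (simp add: j_def q_def)
  qed
  ultimately show ?thesis by blast
qed

lemma wrap_deriv:
  assumes "\<bar>wrap x\<bar> < pi"
  shows "(wrap has_real_derivative 1) (at x)"
proof -
  obtain \<epsilon> where e: "\<epsilon> > 0" "\<And>y. \<bar>y - x\<bar> < \<epsilon> \<Longrightarrow> wrap y = y - (x - wrap x)"
    using wrap_local[OF assms] by blast
  have "((\<lambda>y. y - (x - wrap x)) has_real_derivative 1) (at x)"
    by (auto intro!: derivative_eq_intros)
  moreover have "wrap y = y - (x - wrap x)" if "y \<in> ball x \<epsilon>" for y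
  proof -
    have "\<bar>y - x\<bar> < \<epsilon>" using that by (simp add: dist_real_def abs_minus_commute[of x y])
    then show ?thesis using e(2) by blast
  qed
  ultimately show ?thesis
    using has_field_derivative_transform_within_open[where S="ball x \<epsilon>" and a=x] e(1)
    by (metis centre_in_ball open_ball)
qed

lemma wrap_cos_le:
  assumes "0 \<le> \<rho>" "\<rho> \<le> pi"
  shows "\<bar>wrap x\<bar> \<le> \<rho> \<longleftrightarrow> cos \<rho> \<le> cos x"
proof -
  have "cos \<bar>wrap x\<bar> = cos x" using cos_wrap by (simp add: abs_if)
  moreover have "\<bar>wrap x\<bar> \<le> pi" using wrap_bounds[of x] by auto
  ultimately show ?thesis using cos_mono_le_eq[of \<rho> "\<bar>wrap x\<bar>"] assms by simp
qed

lemma wrap_cos_less: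
  assumes "0 \<le> \<rho>" "\<rho> \<le> pi"
  shows "\<bar>wrap x\<bar> < \<rho> \<longleftrightarrow> cos \<rho> < cos x"
proof -
  have "cos \<bar>wrap x\<bar> = cos x" using cos_wrap by (simp add: abs_if)
  moreover have "\<bar>wrap x\<bar> \<le> pi" using wrap_bounds[of x] by auto
  ultimately show ?thesis using cos_mono_less_eq[of \<rho> "\<bar>wrap x\<bar>"] assms by simp
qed

definition endp :: "(nat \<times> nat) list \<Rightarrow> nat \<Rightarrow> nat \<Rightarrow> bool" where
  "endp E k v \<longleftrightarrow> v = fst (E!k) \<or> v = snd (E!k)"

definition oth :: "(nat \<times> nat) list \<Rightarrow> nat \<Rightarrow> nat \<Rightarrow> nat" where
  "oth E k v = (if v = fst (E!k) then snd (E!k) else fst (E!k))"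

lemma sg_edge:
  assumes "simple_graph n E" "k < length E"
  shows "fst (E!k) < n \<and> snd (E!k) < n \<and> fst (E!k) \<noteq> snd (E!k)"
proof -
  have "E!k \<in> set E" using assms(2) by simp
  then have "case E!k of (i, j) \<Rightarrow> i < n \<and> j < n \<and> i \<noteq> j"
    using bspec[OF conjunct1[OF assms(1)[unfolded simple_graph_def]]] by simp
  then show ?thesis by (simp add: case_prod_beta)
qed

lemma oth_props:
  assumes "simple_graph n E" "k < length E" "endp E k v"
  shows "oth E k v \<noteq> v" "oth E k v < n" "v < n" "adj E v (oth E k v)" "endp E k (oth E k v)"
proof -
  have e: "fst (E!k) < n \<and> snd (E!k) < n \<and> fst (E!k) \<noteq> snd (E!k)" using sg_edge assms by blast
  have m: "E!k \<in> set E" using assms(2) by simp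
  show "oth E k v \<noteq> v" "oth E k v < n" "v < n" "endp E k (oth E k v)"
    using e assms(3) unfolding oth_def endp_def by auto
  show "adj E v (oth E k v)"
    using m assms(3) unfolding oth_def endp_def adj_def by auto
qed

lemma oth_distinct:
  assumes "simple_graph n E" "k < length E" "k' < length E" "k \<noteq> k'"
    "endp E k v" "endp E k' v"
  shows "oth E k v \<noteq> oth E k' v"
proof -
  have d: "E!k \<noteq> E!k'" "E!k \<noteq> (snd (E!k'), fst (E!k'))"
    using conjunct2[OF assms(1)[unfolded simple_graph_def]] assms(2-4) by simp_all
  obtain a b where ab: "E!k = (a,b)" by (meson prod.exhaust)
  obtain c d where cd: "E!k' = (c,d)" by (meson prod.exhaust)
  show ?thesis using d assms(5,6) unfolding oth_def endp_def ab cd by auto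
qed

lemma inc_endp: "\<not> endp E k v \<Longrightarrow> inc E v k = 0"
  unfolding inc_def endp_def by auto

lemma inc_endp_nz:
  assumes "simple_graph n E" "k < length E" "endp E k v"
  shows "inc E v k = 1 \<or> inc E v k = -1"
  using assms unfolding inc_def endp_def by auto

lemma deg2:
  assumes sg: "simple_graph n E"
    and z: "\<forall>i<n. (\<Sum>k<length E. inc E i k * e k) = 0"
    and k: "k < length E" "e k \<noteq> 0" "endp E k v"
  shows "\<exists>k'<length E. e k' \<noteq> 0 \<and> k' \<noteq> k \<and> endp E k' v"
proof (rule ccontr)
  assume "\<not> ?thesis"
  then have o: "\<And>k'. k' < length E \<Longrightarrow> k' \<noteq> k \<Longrightarrow> inc E v k' * e k' = 0"
    using inc_endp by fastforce
  have "v < n" using oth_props(3)[OF sg k(1) k(3)] .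
  then have "(\<Sum>k'<length E. inc E v k' * e k') = 0" using z by blast
  moreover have "(\<Sum>k'\<in>{..<length E} - {k}. inc E v k' * e k') = 0"
    by (rule sum.neutral) (use o in auto)
  moreover have "(\<Sum>k'<length E. inc E v k' * e k') = inc E v k * e k + (\<Sum>k'\<in>{..<length E} - {k}. inc E v k' * e k')"
    using k(1) by (subst sum.remove[of _ k]) auto
  ultimately have "inc E v k * e k = 0" by simp
  then show False using inc_endp_nz[OF sg k(1) k(3)] k(2) by auto
qed

definition goodp :: "nat \<Rightarrow> (nat \<times> nat) list \<Rightarrow> (nat \<Rightarrow> real) \<Rightarrow> nat list \<Rightarrow> bool" where
  "goodp n E e ps \<longleftrightarrow> ps \<noteq> [] \<and> distinct ps \<and> set ps \<subseteq> {..<n} \<and>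
     (\<forall>j. Suc j < length ps \<longrightarrow> adj E (ps!j) (ps!Suc j)) \<and>
     (\<exists>k<length E. e k \<noteq> 0 \<and> endp E k (last ps))"

lemma goodp_len: "goodp n E e ps \<Longrightarrow> length ps \<le> n"
proof -
  assume "goodp n E e ps"
  then have "distinct ps" "set ps \<subseteq> {..<n}" unfolding goodp_def by auto
  then have "card (set ps) \<le> card {..<n}" by (intro card_mono) auto
  then show ?thesis using \<open>distinct ps\<close> by (simp add: distinct_card)
qed

lemma goodp_ext:
  assumes "goodp n E e ps" "w \<notin> set ps" "w < n" "adj E (last ps) w"
    "k < length E" "e k \<noteq> 0" "endp E k w"
  shows "goodp n E e (ps @ [w])"
proof -
  have "adj E ((ps @ [w])!j) ((ps @ [w])!Suc j)" if "Suc j < length (ps @ [w])" for j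
  proof (cases "Suc j < length ps")
    case True
    then show ?thesis using assms(1) unfolding goodp_def by (auto simp: nth_append)
  next
    case False
    then have "j = length ps - 1" "ps \<noteq> []" using that assms(1) unfolding goodp_def by auto
    then show ?thesis using assms(4) by (auto simp: nth_append last_conv_nth)
  qed
  then show ?thesis using assms unfolding goodp_def by auto
qed

lemma forest_inj:
  assumes sg: "simple_graph n E" and nc: "\<not> has_cycle E"
    and z: "\<forall>i<n. (\<Sum>k<length E. inc E i k * e k) = 0"
  shows "\<forall>k<length E. e k = 0"
proof (rule ccontr)
  assume "\<not> ?thesis"
  then obtain k0 where k0: "k0 < length E" "e k0 \<noteq> 0" by auto
  have g0: "goodp n E e [fst (E!k0)]"
    unfolding goodp_def using k0 sg_edge[OF sg k0(1)] by (auto simp: endp_def)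
  define L where "L = length ` {ps. goodp n E e ps}"
  have Lfin: "finite L" using goodp_len by (intro finite_subset[of L "{..n}"]) (auto simp: L_def)
  have "L \<noteq> {}" using g0 L_def by auto
  then have "Max L \<in> L" using Lfin by simp
  then obtain ps where ps: "goodp n E e ps" "length ps = Max L" unfolding L_def by auto
  have maxp: "length qs \<le> length ps" if "goodp n E e qs" for qs
    using ps(2) that Lfin by (auto simp: L_def)
  define v where "v = last ps"
  obtain k1 where k1: "k1 < length E" "e k1 \<noteq> 0" "endp E k1 v" using ps(1) unfolding goodp_def v_def by auto
  obtain k2 where k2: "k2 < length E" "e k2 \<noteq> 0" "k2 \<noteq> k1" "endp E k2 v"
    using deg2[OF sg z k1] by auto
  have notin: "oth E k v \<in> set ps" if "k < length E" "e k \<noteq> 0" "endp E k v" for k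
  proof (rule ccontr)
    assume a: "oth E k v \<notin> set ps"
    have "goodp n E e (ps @ [oth E k v])"
      using goodp_ext[OF ps(1) a] oth_props[OF sg that(1,3)] that v_def by auto
    then show False using maxp by fastforce
  qed
  have ne: "ps \<noteq> []" using ps(1) unfolding goodp_def by auto
  define l where "l = length ps"
  have vl: "v = ps!(l - 1)" using ne unfolding v_def l_def by (simp add: last_conv_nth)
  have dist: "distinct ps" using ps(1) unfolding goodp_def by auto
  have "\<exists>w j. w = ps!j \<and> j + 2 < l \<and> adj E v w"
  proof -
    have w1: "oth E k1 v \<in> set ps" "oth E k2 v \<in> set ps" using notin k1 k2 by auto
    have w12: "oth E k1 v \<noteq> oth E k2 v" using oth_distinct[OF sg k1(1) k2(1) k2(3)[symmetric] k1(3) k2(4)] .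
    have nv: "oth E k1 v \<noteq> v" "oth E k2 v \<noteq> v" using oth_props(1) sg k1 k2 by auto
    have "\<exists>k. k < length E \<and> endp E k v \<and> oth E k v \<in> set ps \<and> oth E k v \<noteq> v \<and>
               (l \<ge> 2 \<longrightarrow> oth E k v \<noteq> ps!(l-2))"
    proof (cases "l \<ge> 2 \<and> oth E k1 v = ps!(l-2)")
      case True
      then show ?thesis using w1(2) w12 nv(2) k2 by auto
    next
      case False
      then show ?thesis using w1(1) nv(1) k1 by auto
    qed
    then obtain k where k: "k < length E" "endp E k v" "oth E k v \<in> set ps" "oth E k v \<noteq> v"
      "l \<ge> 2 \<Longrightarrow> oth E k v \<noteq> ps!(l-2)" by blast
    obtain j where j: "j < l" "ps!j = oth E k v" using k(3) unfolding l_def by (auto simp: in_set_conv_nth)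
    have jl1: "j \<noteq> l - 1" using j k(4) vl by auto
    moreover have "j \<noteq> l - 2" using jl1 j k(4) k(5) vl by (cases "l \<ge> 2") auto
    ultimately have "j + 2 < l" using j by linarith
    then show ?thesis using j oth_props(4)[OF sg k(1) k(2)] by auto
  qed
  then obtain w j where wj: "w = ps!j" "j + 2 < l" "adj E v w" by blast
  define vs where "vs = drop j ps"
  have lvs: "length vs = l - j" unfolding vs_def l_def by simp
  have hd: "hd vs = w" unfolding vs_def using wj l_def by (simp add: hd_drop_conv_nth)
  have "is_path E (vs @ [hd vs])"
    unfolding is_path_def
  proof (intro conjI allI impI)
    show "vs @ [hd vs] \<noteq> []" by simp
    fix q assume q: "Suc q < length (vs @ [hd vs])"
    show "adj E ((vs @ [hd vs]) ! q) ((vs @ [hd vs]) ! Suc q)"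
    proof (cases "Suc q < length vs")
      case True
      then have "Suc (j + q) < length ps" using lvs l_def by simp
      then have "adj E (ps!(j+q)) (ps!Suc (j+q))" using ps(1) unfolding goodp_def by blast
      then show ?thesis using True unfolding vs_def by (simp add: nth_append)
    next
      case False
      then have q': "Suc q = length vs" using q by simp
      have jq: "j + q = l - 1" using q' lvs wj(2) by simp
      have "(vs @ [hd vs]) ! q = vs ! q" using q' by (simp add: nth_append)
      also have "\<dots> = ps!(j+q)" unfolding vs_def using q' lvs wj(2) l_def by simp
      finally have "(vs @ [hd vs]) ! q = ps!(l-1)" using jq by simp
      moreover have "(vs @ [hd vs]) ! Suc q = w" using q' hd by (simp add: nth_append)
      ultimately show ?thesis using wj(3) vl by simp
    qed
  qed
  moreover have "length vs \<ge> 3" using lvs wj by simp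
  moreover have "distinct vs" using dist unfolding vs_def by simp
  ultimately have "has_cycle E" unfolding has_cycle_def by blast
  then show False using nc by simp
qed

lemma inj_bound:
  fixes a :: "nat \<Rightarrow> nat \<Rightarrow> real"
  assumes inj: "\<And>e. (\<forall>i<n. (\<Sum>k<m. a i k * e k) = 0) \<Longrightarrow> (\<forall>k<m. e k = 0)"
  shows "\<exists>L>0. \<forall>e. L * (\<Sum>k<m. (e k)^2) \<le> (\<Sum>i<n. (\<Sum>k<m. a i k * e k)^2)"
proof (cases "m = 0")
  case True
  then show ?thesis by (intro exI[of _ 1]) (simp add: sum_nonneg)
next
  case False
  define F where "F = (\<lambda>e::nat\<Rightarrow>real. \<Sum>i<n. (\<Sum>k<m. a i k * e k)^2)"
  define g where "g = (\<lambda>e::nat\<Rightarrow>real. \<Sum>k<m. (e k)^2)"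
  define K where "K = PiE UNIV (\<lambda>k. if k < m then {-1..1::real} else {0})"
  have "compactin (powertop_real UNIV) K"
    unfolding K_def by (simp add: compactin_PiE)
  then have cK: "compact K"
    by (simp add: euclidean_product_topology)
  have c1: "\<And>k. continuous_on UNIV (\<lambda>e::nat\<Rightarrow>real. e k)" by simp
  have cg: "continuous_on UNIV g" unfolding g_def by (intro continuous_intros c1)
  have cF: "continuous_on UNIV F" unfolding F_def by (intro continuous_intros c1)
  have "closed (g -` {1})" using cg by (intro closed_vimage) auto
  define Sph where "Sph = K \<inter> g -` {1}"
  have cS: "compact Sph" unfolding Sph_def using cK \<open>closed (g -` {1})\<close> by (rule compact_Int_closed)
  define e0 where "e0 = (\<lambda>k::nat. if k = 0 then 1 else (0::real))"
  have "(\<Sum>k<m. (e0 k)^2) = (\<Sum>k<m. if k = 0 then 1 else 0)" by (intro sum.cong) (auto simp: e0_def)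
  then have "g e0 = 1" using False unfolding g_def by simp
  moreover have "e0 \<in> K" unfolding K_def e0_def using False by auto
  ultimately have "e0 \<in> Sph" unfolding Sph_def by simp
  then have "Sph \<noteq> {}" by auto
  then obtain es where es: "es \<in> Sph" "\<And>e. e \<in> Sph \<Longrightarrow> F es \<le> F e"
    using continuous_attains_inf[OF cS _ continuous_on_subset[OF cF]] by blast
  have Fnn: "\<And>e. F e \<ge> 0" unfolding F_def by (simp add: sum_nonneg)
  have "F es > 0"
  proof (rule ccontr)
    assume "\<not> F es > 0"
    then have "F es = 0" using Fnn[of es] by simp
    then have "\<forall>i<n. (\<Sum>k<m. a i k * es k)^2 = 0"
      unfolding F_def using sum_nonneg_eq_0_iff[of "{..<n}" "\<lambda>i. (\<Sum>k<m. a i k * es k)^2"] by auto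
    then have "\<forall>k<m. es k = 0" using inj by simp
    then have "g es = 0" unfolding g_def by simp
    then show False using es(1) unfolding Sph_def by simp
  qed
  moreover have "F es * g e \<le> F e" for e
  proof (cases "g e = 0")
    case True
    then show ?thesis using Fnn by simp
  next
    case False
    have gpos: "g e > 0" using False unfolding g_def by (metis less_eq_real_def sum_nonneg zero_le_power2)
    define s where "s = sqrt (g e)"
    have s: "s > 0" "s^2 = g e" using gpos unfolding s_def by auto
    define e' where "e' = (\<lambda>k. if k < m then e k / s else 0)"
    have "e' \<in> K"
    proof -
      have "\<bar>e k\<bar> \<le> s" if "k < m" for k
      proof -
        have "(e k)^2 \<le> g e" unfolding g_def
          using that by (intro member_le_sum) auto
        then show ?thesis unfolding s_def by (simp add: real_le_rsqrt)
      qed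
      then show ?thesis unfolding K_def e'_def using s
        by (auto simp: abs_le_iff divide_le_eq le_divide_eq) (smt (verit))
    qed
    moreover have "g e' = 1" unfolding g_def e'_def using s gpos
      by (simp add: power_divide sum_divide_distrib[symmetric] g_def)
    ultimately have "e' \<in> Sph" unfolding Sph_def by simp
    then have "F es \<le> F e'" using es(2) by simp
    also have "F e' = F e / s^2" unfolding F_def e'_def
      by (simp add: sum_divide_distrib[symmetric] power_divide mult.assoc[symmetric] times_divide_eq_right)
    finally show ?thesis using s gpos by (simp add: le_divide_eq)
  qed
  ultimately show ?thesis unfolding g_def by (intro exI[of _ "F es"]) (auto simp: F_def)
qed

lemma col_sum:
  assumes "simple_graph n E" "k < length E"
  shows "(\<Sum>i<n. inc E i k) = 0"
proof -
  obtain a b where ab: "E!k = (a,b)" by (meson prod.exhaust)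
  have "E!k \<in> set E" using assms(2) by simp
  then have "case E!k of (i, j) \<Rightarrow> i < n \<and> j < n \<and> i \<noteq> j"
    using bspec[OF conjunct1[OF assms(1)[unfolded simple_graph_def]]] by simp
  then have h: "a < n" "b < n" "a \<noteq> b" using ab by auto
  have "(\<Sum>i<n. inc E i k) = (\<Sum>i<n. (if i = a then 1 else 0) - (if i = b then 1 else 0))"
    using h by (intro sum.cong) (auto simp: inc_def ab)
  also have "\<dots> = 0" using h by (simp add: sum_subtractf)
  finally show ?thesis .
qed

lemma sum_u_zero:
  assumes "simple_graph n E"
  shows "(\<Sum>i<n. (\<Sum>k<length E. inc E i k * e k)) = 0"
proof -
  have "(\<Sum>i<n. (\<Sum>k<length E. inc E i k * e k)) = (\<Sum>k<length E. e k * (\<Sum>i<n. inc E i k))"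
    by (subst sum.swap) (simp add: sum_distrib_left mult.commute)
  also have "\<dots> = 0" using col_sum[OF assms] by simp
  finally show ?thesis .
qed

lemma term_bound:
  fixes r kr u :: real
  assumes "r > 0" "kr > 0" "\<bar>kr * u\<bar> \<le> r / 2"
  shows "u * (1 / (r + kr * u)) - u / r \<le> - (kr / (2 * r^2)) * u^2"
proof -
  define D where "D = r + kr * u"
  have D: "D \<ge> r / 2" "D \<le> 2 * r" using assms unfolding D_def by (auto simp: abs_le_iff)
  have Dp: "D > 0" using D assms by simp
  have eq: "u * (1 / D) - u / r = - (kr * u^2) / (r * D)"
    using Dp assms(1) unfolding D_def by (simp add: field_simps power2_eq_square)
  have "kr * u^2 / (r * (2 * r)) \<le> kr * u^2 / (r * D)"
    using D Dp assms by (intro divide_left_mono) (auto intro: mult_pos_pos)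
  then have "- (kr * u^2) / (r * D) \<le> - (kr * u^2 / (r * (2 * r)))" by simp
  also have "\<dots> = - (kr / (2 * r^2)) * u^2" by (simp add: power2_eq_square field_simps)
  finally show ?thesis using eq unfolding D_def by simp
qed

lemma u_bound:
  assumes "\<forall>k<m. \<bar>e k\<bar> \<le> \<delta>"
  shows "\<bar>\<Sum>k<m. inc E i k * e k\<bar> \<le> real m * \<delta>"
proof -
  have "\<bar>\<Sum>k<m. inc E i k * e k\<bar> \<le> (\<Sum>k<m. \<bar>inc E i k * e k\<bar>)" by (rule sum_abs)
  also have "\<dots> \<le> (\<Sum>k<m. \<delta>)"
  proof (intro sum_mono)
    fix k assume "k \<in> {..<m}"
    then have "\<bar>e k\<bar> \<le> \<delta>" using assms by simp
    moreover have "\<bar>inc E i k\<bar> \<le> 1" unfolding inc_def by auto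
    ultimately show "\<bar>inc E i k * e k\<bar> \<le> \<delta>"
      by (simp add: abs_mult) (metis abs_ge_zero mult_le_one mult_left_le_one_le mult_mono' order_trans mult_right_le_one_le mult.commute abs_ge_zero)
  qed
  finally show ?thesis by simp
qed

lemma lyap:
  fixes \<theta> :: "real \<Rightarrow> nat \<Rightarrow> real"
  assumes sg: "simple_graph n E" and r: "r > 0" and kr: "kr > 0" and Lp: "L > 0"
    and bound: "\<And>e. L * (\<Sum>k<length E. (e k)^2) \<le> (\<Sum>i<n. (\<Sum>k<length E. inc E i k * e k)^2)"
    and der: "\<forall>t\<ge>0. \<forall>i<n. ((\<lambda>s. \<theta> s i) has_real_derivative
          1 / (r + kr * (\<Sum>k<length E. inc E i k * err n E zs \<theta> t k))) (at t within {0..})"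
    and dl: "0 < \<delta>" "\<delta> < pi" "kr * real (length E) * \<delta> \<le> r / 2"
    and T: "0 \<le> T" "\<forall>s\<in>{0..T}. \<forall>k<length E. \<bar>err n E zs \<theta> s k\<bar> \<le> \<delta>"
  shows "(\<Sum>k<length E. (err n E zs \<theta> T k)^2) * exp (2 * (kr * L / (2 * r^2)) * T)
          \<le> (\<Sum>k<length E. (err n E zs \<theta> 0 k)^2)"
proof -
  define m where "m = length E"
  define a where "a = kr * L / (2 * r^2)"
  define y where "y = (\<lambda>s k. (\<Sum>i<n. inc E i k * \<theta> s i) - zs k)"
  define e where "e = err n E zs \<theta>"
  have ey: "e s k = wrap (y s k)" for s k unfolding e_def err_def y_def by simp
  define u where "u = (\<lambda>s i. \<Sum>k<m. inc E i k * e s k)"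
  define f where "f = (\<lambda>s i. 1 / (r + kr * u s i))"
  define dy where "dy = (\<lambda>s k. \<Sum>i<n. inc E i k * f s i)"
  define V where "V = (\<lambda>s. \<Sum>k<m. (e s k)^2)"
  define dV where "dV = (\<lambda>s. \<Sum>k<m. 2 * e s k * dy s k)"
  define W where "W = (\<lambda>s. V s * exp (2 * a * s))"
  define dW where "dW = (\<lambda>s. dV s * exp (2 * a * s) + V s * (exp (2 * a * s) * (2 * a)))"
  have dth: "((\<lambda>s. \<theta> s i) has_real_derivative f t i) (at t within {0..})" if "t \<ge> 0" "i < n" for t i
    using der that unfolding f_def u_def e_def m_def by blast
  have dyk: "((\<lambda>s. y s k) has_real_derivative dy t k) (at t within {0..})" if "t \<ge> 0" for t k
  proof -
    have "((\<lambda>s. \<Sum>i<n. inc E i k * \<theta> s i) has_real_derivative (\<Sum>i<n. inc E i k * f t i)) (at t within {0..})"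
      by (rule DERIV_sum, rule DERIV_cmult, rule dth[OF that]) auto
    from DERIV_diff[OF this DERIV_const[of "zs k"]] show ?thesis unfolding y_def dy_def by simp
  qed
  have dek: "((\<lambda>s. e s k) has_real_derivative dy t k) (at t within {0..})"
    if "t \<in> {0..T}" "k < m" for t k
  proof -
    have "\<bar>wrap (y t k)\<bar> < pi" using T(2) that dl ey unfolding e_def m_def by force
    then have "(wrap has_real_derivative 1) (at (y t k))" by (rule wrap_deriv)
    from DERIV_chain[OF this dyk] have "(wrap \<circ> (\<lambda>s. y s k) has_real_derivative dy t k) (at t within {0..})"
      using that by simp
    then show ?thesis unfolding ey[abs_def] by (simp add: o_def)
  qed
  have dVt: "(V has_real_derivative dV t) (at t within {0..})" if "t \<in> {0..T}" for t
  proof -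
    have "((\<lambda>s. (e s k)^2) has_real_derivative 2 * e t k * dy t k) (at t within {0..})" if "k < m" for k
      using DERIV_power[OF dek[OF \<open>t \<in> {0..T}\<close> that], of 2]
      by (rule DERIV_cong) simp
    then show ?thesis unfolding V_def dV_def by (intro DERIV_sum) auto
  qed
  have dWt: "(W has_real_derivative dW t) (at t within {0..})" if "t \<in> {0..T}" for t
  proof -
    have ex: "((\<lambda>s. exp (2 * a * s)) has_real_derivative exp (2 * a * t) * (2 * a)) (at t within {0..})"
      by (auto intro!: derivative_eq_intros)
    from DERIV_mult'[OF dVt[OF that] ex] show ?thesis unfolding W_def dW_def
      by (rule DERIV_cong) (simp add: algebra_simps)
  qed
  have ub: "\<bar>kr * u t i\<bar> \<le> r / 2" if "t \<in> {0..T}" for t i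
  proof -
    have "\<bar>u t i\<bar> \<le> real m * \<delta>" unfolding u_def
      by (rule u_bound) (use T(2) that in \<open>auto simp: e_def m_def\<close>)
    then have "\<bar>kr * u t i\<bar> \<le> kr * (real m * \<delta>)" using kr by (simp add: abs_mult)
    then show ?thesis using dl(3) unfolding m_def by (simp add: mult.assoc)
  qed
  have neg: "dW t \<le> 0" if "t \<in> {0..T}" for t
  proof -
    have "dV t = 2 * (\<Sum>i<n. u t i * f t i)"
    proof -
      have "dV t = 2 * (\<Sum>k<m. \<Sum>i<n. e t k * inc E i k * f t i)"
        unfolding dV_def dy_def by (simp add: sum_distrib_left sum_distrib_right mult.assoc)
      also have "\<dots> = 2 * (\<Sum>i<n. \<Sum>k<m. e t k * inc E i k * f t i)" by (subst sum.swap) simp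
      also have "\<dots> = 2 * (\<Sum>i<n. u t i * f t i)" unfolding u_def
        by (simp add: sum_distrib_right sum_distrib_left mult_ac)
      finally show ?thesis .
    qed
    also have "(\<Sum>i<n. u t i * f t i) = (\<Sum>i<n. u t i * f t i - u t i / r)"
    proof -
      have "(\<Sum>i<n. u t i) = 0" unfolding u_def m_def using sum_u_zero[OF sg] by blast
      then have "(\<Sum>i<n. u t i / r) = 0" by (simp add: sum_divide_distrib[symmetric])
      then show ?thesis by (simp add: sum_subtractf)
    qed
    also have "\<dots> \<le> (\<Sum>i<n. - (kr / (2 * r^2)) * (u t i)^2)"
      by (intro sum_mono) (use term_bound[OF r kr ub[OF that]] in \<open>simp add: f_def\<close>)
    also have "\<dots> = - (kr / (2 * r^2)) * (\<Sum>i<n. (u t i)^2)" by (simp add: sum_distrib_left)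
    also have "\<dots> \<le> - (kr / (2 * r^2)) * (L * V t)"
    proof -
      have "L * V t \<le> (\<Sum>i<n. (u t i)^2)" using bound[of "e t"] unfolding V_def u_def m_def .
      moreover have "kr / (2 * r^2) \<ge> 0" using kr r by simp
      ultimately have "(kr / (2 * r^2)) * (L * V t) \<le> (kr / (2 * r^2)) * (\<Sum>i<n. (u t i)^2)"
        by (rule mult_left_mono)
      then show ?thesis by linarith
    qed
    finally have "dV t \<le> 2 * (- (kr / (2 * r^2)) * (L * V t))" by simp
    then have "dV t + 2 * a * V t \<le> 0" unfolding a_def by (simp add: field_simps)
    then have "(dV t + 2 * a * V t) * exp (2 * a * t) \<le> 0" by (simp add: mult_nonpos_nonneg)
    then show ?thesis unfolding dW_def by (simp add: algebra_simps)
  qed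
  have cont: "continuous_on {0..T} W"
  proof -
    have "continuous (at t within {0..T}) W" if "t \<in> {0..T}" for t
      using DERIV_continuous[OF dWt[OF that]] continuous_within_subset[of t "{0..}" W "{0..T}"] by auto
    then show ?thesis using continuous_on_eq_continuous_within by blast
  qed
  have "W T \<le> W 0"
  proof (rule DERIV_nonpos_imp_decreasing_open[OF T(1) _ cont])
    fix x assume x: "0 < x" "x < T"
    have "interior {0::real..} = {0<..}" by (rule interior_Ici[of "-1"]) simp
    then have "at x within {0..} = at x" using x by (intro at_within_interior) simp
    then show "\<exists>y. DERIV W x :> y \<and> y \<le> 0" using dWt[of x] neg[of x] x by auto
  qed
  then show ?thesis unfolding W_def V_def e_def m_def a_def by simp
qed

theorem theorem2:
  fixes n :: nat and E :: "(nat \<times> nat) list" and r kr :: real and zs :: "nat \<Rightarrow> real"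
  assumes "n \<ge> 2"
    and "simple_graph n E"
    and "graph_connected n E"
    and "\<not> has_cycle E"
    and "r > 0" and "kr > 0"
    and "r - pi * kr * (MAX i\<in>{0..<n}. real (card (nbrs E i))) > 0"
  shows "\<exists>\<delta>>0. \<exists>c>0. \<exists>a>0. \<forall>\<theta> :: real \<Rightarrow> nat \<Rightarrow> real.
     ((\<forall>t\<ge>0. \<forall>i<n. ((\<lambda>s. \<theta> s i) has_real_derivative
          1 / (r + kr * (\<Sum>k<length E. inc E i k * err n E zs \<theta> t k))) (at t within {0..}))
      \<and> vnorm (length E) (err n E zs \<theta> 0) < \<delta>)
     \<longrightarrow> (\<forall>t\<ge>0. vnorm (length E) (err n E zs \<theta> t)
              \<le> c * vnorm (length E) (err n E zs \<theta> 0) * exp (- a * t))"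
proof -
  note sg = assms(2) and r = assms(5) and kr = assms(6)
  define m where "m = length E"
  have injE: "\<And>e. (\<forall>i<n. (\<Sum>k<m. inc E i k * e k) = 0) \<Longrightarrow> (\<forall>k<m. e k = 0)"
    using forest_inj[OF assms(2) assms(4)] unfolding m_def by blast
  obtain L where L: "L > 0" "\<And>e. L * (\<Sum>k<m. (e k)^2) \<le> (\<Sum>i<n. (\<Sum>k<m. inc E i k * e k)^2)"
    using inj_bound[where n=n and m=m and a="inc E", OF injE] by blast
  define \<delta> where "\<delta> = min (pi/2) (r / (2*kr*(real m + 1)))"
  define a where "a = kr * L / (2 * r^2)"
  have apos: "a > 0" unfolding a_def using L r kr by simp
  have dpos: "0 < \<delta>" unfolding \<delta>_def using r kr by simp
  have dpi: "\<delta> \<le> pi / 2" unfolding \<delta>_def by (rule min.cobounded1)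
  have d3: "kr * real m * \<delta> \<le> r / 2"
  proof -
    have "\<delta> \<le> r / (2*kr*(real m + 1))" unfolding \<delta>_def by simp
    then have "\<delta> * (2*kr*(real m + 1)) \<le> r" using kr by (simp add: le_divide_eq)
    moreover have "kr * real m * \<delta> \<le> kr * (real m + 1) * \<delta>" using kr dpos by simp
    ultimately show ?thesis by (simp add: algebra_simps)
  qed
  have main: "vnorm m (err n E zs \<theta> t) \<le> 1 * vnorm m (err n E zs \<theta> 0) * exp (- a * t)"
    if der: "\<forall>t\<ge>0. \<forall>i<n. ((\<lambda>s. \<theta> s i) has_real_derivative
          1 / (r + kr * (\<Sum>k<length E. inc E i k * err n E zs \<theta> t k))) (at t within {0..})"
      and small: "vnorm m (err n E zs \<theta> 0) < \<delta>" and t: "t \<ge> 0" for \<theta> t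
  proof -
    define e where "e = err n E zs \<theta>"
    define y where "y = (\<lambda>s k. (\<Sum>i<n. inc E i k * \<theta> s i) - zs k)"
    have ey: "e s k = wrap (y s k)" for s k unfolding e_def err_def y_def by simp
    define V where "V = (\<lambda>s. \<Sum>k<m. (e s k)^2)"
    have Vnn: "V s \<ge> 0" for s unfolding V_def by (simp add: sum_nonneg)
    have vn: "vnorm m (e s) = sqrt (V s)" for s unfolding vnorm_def V_def by simp
    define s0 where "s0 = sqrt (V 0)"
    have s0: "0 \<le> s0" "s0 < \<delta>" using small vn Vnn[of 0] unfolding s0_def e_def by auto
    define \<rho> where "\<rho> = (s0 + \<delta>) / 2"
    have rho: "s0 < \<rho>" "\<rho> < \<delta>" "\<rho> \<le> pi" using s0 dpi unfolding \<rho>_def by auto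
    have comp: "\<bar>e s k\<bar> \<le> sqrt (V s)" if "k < m" for s k
    proof -
      have "(e s k)^2 \<le> V s" unfolding V_def using that by (intro member_le_sum) auto
      then show ?thesis by (metis real_sqrt_abs real_sqrt_le_mono)
    qed
    have lyapT: "V T * exp (2 * a * T) \<le> V 0"
      if "0 \<le> T" "\<forall>s\<in>{0..T}. \<forall>k<m. \<bar>e s k\<bar> \<le> \<delta>" for T
    proof -
      have dlt: "\<delta> < pi" using dpi pi_gt_zero by linarith
      show ?thesis
        using lyap[OF sg r kr L(1) L(2)[unfolded m_def] der dpos dlt d3[unfolded m_def] that(1)] that(2)
        unfolding V_def a_def e_def m_def by simp
    qed
    have VT: "V T \<le> V 0"
      if "0 \<le> T" "\<forall>s\<in>{0..T}. \<forall>k<m. \<bar>e s k\<bar> \<le> \<delta>" for T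
    proof -
      have "exp (2 * a * T) \<ge> 1" using apos that(1) by simp
      then have "V T * 1 \<le> V T * exp (2 * a * T)" using Vnn by (intro mult_left_mono) auto
      then show ?thesis using lyapT[OF that] by simp
    qed
    have contT: "continuous_on {0..} (\<lambda>s. \<theta> s i)" if "i < n" for i
      by (rule DERIV_continuous_on) (use der that in auto)
    have contY: "continuous_on {0..} (\<lambda>s. y s k)" for k
      unfolding y_def by (intro continuous_intros contT) auto
    define g where "g = (\<lambda>k s. cos (y s k))"
    have cg: "continuous_on {0..} (g k)" for k unfolding g_def by (intro continuous_on_cos contY)
    have G: "\<forall>t\<ge>0. \<forall>k<m. \<bar>e t k\<bar> \<le> \<rho>"
    proof (rule ccontr)
      assume "\<not> ?thesis"
      then obtain t1 k1 where t1: "t1 \<ge> 0" "k1 < m" "\<not> \<bar>e t1 k1\<bar> \<le> \<rho>" by auto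
      define Z where "Z = (\<Union>k\<in>{..<m}. {0..t1} \<inter> g k -` {..cos \<rho>})"
      have "closed Z" unfolding Z_def
        by (intro closed_UN ballI finite_lessThan continuous_closed_preimage
              continuous_on_subset[OF cg]) auto
      moreover have "Z = {0..t1} \<inter> Z" unfolding Z_def by auto
      ultimately have cZ: "compact Z" by (metis compact_Int_closed compact_Icc)
      have rho0: "0 \<le> \<rho>" using rho s0 by simp
      have "cos (y t1 k1) \<le> cos \<rho>" using t1(3) wrap_cos_le[OF rho0 rho(3)] ey by force
      then have "t1 \<in> Z" unfolding Z_def g_def using t1 by auto
      then obtain T where T: "T \<in> Z" "\<And>z. z \<in> Z \<Longrightarrow> T \<le> z"
        using compact_attains_inf[OF cZ] by blast
      then obtain k0 where k0: "k0 < m" "0 \<le> T" "T \<le> t1" "g k0 T \<le> cos \<rho>" unfolding Z_def by auto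
      have below: "\<bar>e s k\<bar> < \<rho>" if "0 \<le> s" "s < T" "k < m" for s k
      proof -
        have "s \<notin> Z" using T(2) that by force
        then have "\<not> g k s \<le> cos \<rho>" unfolding Z_def using that k0 by auto
        then show ?thesis using wrap_cos_less[OF rho0 rho(3)] ey unfolding g_def by simp
      qed
      have at0: "\<bar>e 0 k\<bar> < \<rho>" if "k < m" for k using comp[OF that, of 0] rho(1) s0_def by simp
      have "T \<noteq> 0"
      proof
        assume "T = 0"
        then have "g k0 0 \<le> cos \<rho>" using k0 by simp
        then show False using at0[OF k0(1)] wrap_cos_less[OF rho0 rho(3)] ey unfolding g_def by force
      qed
      then have Tpos: "T > 0" using k0 by simp
      have s0pi: "s0 \<le> pi" using rho by simp
      have ge: "cos s0 \<le> g k0 s" if "s \<in> {0..<T}" for s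
      proof -
        have "\<forall>s'\<in>{0..s}. \<forall>k<m. \<bar>e s' k\<bar> \<le> \<delta>"
          using below that rho(2) by (meson atLeastAtMost_iff atLeastLessThan_iff le_less_trans less_imp_le order.strict_trans)
        then have "V s \<le> V 0" using VT that by simp
        then have "\<bar>e s k0\<bar> \<le> s0" using comp[OF k0(1), of s] unfolding s0_def
          by (meson order_trans real_sqrt_le_mono)
        then show ?thesis using wrap_cos_le[OF s0(1) s0pi] ey unfolding g_def by simp
      qed
      have clo: "closed ({0..T} \<inter> g k0 -` {cos s0..})"
        by (intro continuous_closed_preimage continuous_on_subset[OF cg]) auto
      have "{0..<T} \<subseteq> {0..T} \<inter> g k0 -` {cos s0..}" using ge by auto
      then have "closure {0..<T} \<subseteq> {0..T} \<inter> g k0 -` {cos s0..}" using clo by (rule closure_minimal)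
      moreover have "T \<in> closure {0..<T}" using Tpos by simp
      ultimately have "T \<in> {0..T} \<inter> g k0 -` {cos s0..}" by blast
      then have "cos s0 \<le> g k0 T" by simp
      moreover have "cos \<rho> < cos s0" using cos_mono_less_eq[of \<rho> s0] s0 rho by simp
      ultimately show False using k0(4) by simp
    qed
    have "\<forall>s\<in>{0..t}. \<forall>k<m. \<bar>e s k\<bar> \<le> \<delta>" using G rho(2) by force
    then have le: "V t * exp (2 * a * t) \<le> V 0" using lyapT t by blast
    have "V t = V t * exp (2 * a * t) * exp (- a * t)^2"
      by (simp add: exp_add[symmetric] power2_eq_square mult.assoc)
    also have "\<dots> \<le> V 0 * exp (- a * t)^2" using le by (intro mult_right_mono) auto
    finally have "sqrt (V t) \<le> sqrt (V 0 * exp (- a * t)^2)" by (rule real_sqrt_le_mono)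
    also have "\<dots> = s0 * exp (- a * t)" unfolding s0_def by (simp add: real_sqrt_mult)
    finally show ?thesis using vn unfolding e_def s0_def by simp
  qed
  show ?thesis
    apply (rule exI[of _ \<delta>], rule conjI, rule dpos)
    apply (rule exI[of _ 1], rule conjI, simp)
    apply (rule exI[of _ a], rule conjI, rule apos)
    using main unfolding m_def by blast
qed

end
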